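(* There is a constant $K_1>0$ such that for any finite $B,C\subset\mathbb Z^b\times\{0,1\}$, every $M\in\mathcal M^B_C$ and every $s\geq0$, $$|\!|\!| M|\!|\!|_s\leq K_1\max_{i\in\overline C}|\!|\!| M_{\{i\}}|\!|\!|_{s+b},$$ where $M_{\{i\}}$ is the submatrix of $M$ formed by the rows indexed by $\{(i,a)\in C\}$.
   Context: $d,\nu\geq1$, $b=\nu+d$. For $n\in\mathbb Z^b$, $|n|=\max_i|n_i|$, $\langle n\rangle=\max(|n|,1)$. For finite $B,C\subset\mathbb Z^b\times\{0,1\}$, $\mathcal M^B_C$ is the space of complex matrices $(M_k^{k'})_{k\in C,k'\in B}$; $\overline B,\overline C$ are the projections on $\mathbb Z^b$; $M_i^{i'}$ is the block with rows $\{(i,a)\in C\}$ and columns $\{(i',a')\in B\}$. A norm $|\cdot|$ is fixed on complex matrices of size at most $2\times2$ with $|UW|\leq|U||W|$ and $|U|\leq|W|$ if $U$ is a submatrix of $W$. For a matrix $M$ with row set $C'$ and column set $B'$, $[M(n)]:=\max_{i-i'=n,i\in\overline{C'},i'\in\overline{B'}}|M_i^{i'}|$ if $n\in\overline{C'}-\overline{B'}$, $0$ otherwise, and $|\!|\!| M|\!|\!|_s^2:=K_0\sum_n[M(n)]^2\langle n\rangle^{2s}$ with $K_0>0$ a fixed constant. *)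

theory Defs
  imports "HOL-Analysis.Analysis"
begin

text \<open>Indices in Z^b x {0,1}: pairs (i, a) with i :: int^'b (b = CARD('b)) and a :: nat,
  a restricted to {0,1} by explicit hypotheses.\<close>

type_synonym 'b idx = "(int ^ 'b) \<times> nat"

definition supn :: "int ^ 'b::finite \<Rightarrow> real" where
  "supn n = Max (range (\<lambda>k. real_of_int \<bar>n $ k\<bar>))"

definition jbr :: "int ^ 'b::finite \<Rightarrow> real" where
  "jbr n = max (supn n) 1"

text \<open>A block matrix of size at most 2x2 is given by a row index set R, a column index set S
  (both subsets of {0,1}) and its entries U a a' for a in R, a' in S.\<close>
definition block_norm :: "(nat set \<Rightarrow> nat set \<Rightarrow> (nat \<Rightarrow> nat \<Rightarrow> complex) \<Rightarrow> real) \<Rightarrow> bool" where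
  "block_norm nrm \<longleftrightarrow>
     (\<forall>R S U V. R \<subseteq> {0,1} \<and> S \<subseteq> {0,1} \<and> (\<forall>a\<in>R. \<forall>a'\<in>S. U a a' = V a a')
        \<longrightarrow> nrm R S U = nrm R S V) \<and>
     (\<forall>R S U. R \<subseteq> {0,1} \<and> S \<subseteq> {0,1} \<longrightarrow> nrm R S U \<ge> 0) \<and>
     (\<forall>R S U. R \<subseteq> {0,1} \<and> S \<subseteq> {0,1} \<longrightarrow>
        (nrm R S U = 0 \<longleftrightarrow> (\<forall>a\<in>R. \<forall>a'\<in>S. U a a' = 0))) \<and>
     (\<forall>R S U c. R \<subseteq> {0,1} \<and> S \<subseteq> {0,1} \<longrightarrow>
        nrm R S (\<lambda>a a'. c * U a a') = cmod c * nrm R S U) \<and>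
     (\<forall>R S U V. R \<subseteq> {0,1} \<and> S \<subseteq> {0,1} \<longrightarrow>
        nrm R S (\<lambda>a a'. U a a' + V a a') \<le> nrm R S U + nrm R S V) \<and>
     (\<forall>R S T U W. R \<subseteq> {0,1} \<and> S \<subseteq> {0,1} \<and> T \<subseteq> {0,1} \<longrightarrow>
        nrm R T (\<lambda>a c. \<Sum>a'\<in>S. U a a' * W a' c) \<le> nrm R S U * nrm S T W) \<and>
     (\<forall>R S R' S' U. R \<subseteq> {0,1} \<and> S \<subseteq> {0,1} \<and> R' \<subseteq> R \<and> S' \<subseteq> S \<longrightarrow>
        nrm R' S' U \<le> nrm R S U)"

definition sites :: "'b idx set \<Rightarrow> int ^ 'b \<Rightarrow> nat set" where
  "sites C i = {a. (i, a) \<in> C}"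

definition blk :: "('b idx \<Rightarrow> 'b idx \<Rightarrow> complex) \<Rightarrow> int ^ 'b \<Rightarrow> int ^ 'b \<Rightarrow> nat \<Rightarrow> nat \<Rightarrow> complex" where
  "blk M i i' = (\<lambda>a a'. M (i, a) (i', a'))"

definition diffs :: "'b idx set \<Rightarrow> 'b idx set \<Rightarrow> (int ^ 'b) set" where
  "diffs C B = {i - i' | i i'. i \<in> fst ` C \<and> i' \<in> fst ` B}"

definition brk :: "(nat set \<Rightarrow> nat set \<Rightarrow> (nat \<Rightarrow> nat \<Rightarrow> complex) \<Rightarrow> real) \<Rightarrow>
    ('b::finite) idx set \<Rightarrow> 'b idx set \<Rightarrow> ('b idx \<Rightarrow> 'b idx \<Rightarrow> complex) \<Rightarrow> int ^ 'b \<Rightarrow> real" where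
  "brk nrm C B M n =
     (if n \<in> diffs C B then
        Max {nrm (sites C i) (sites B i') (blk M i i') | i i'.
               i \<in> fst ` C \<and> i' \<in> fst ` B \<and> i - i' = n}
      else 0)"

text \<open>|||M|||_s; [M(n)] vanishes outside the finite set diffs C B, so the sum over Z^b
  is the finite sum over diffs C B.\<close>
definition tnorm :: "(nat set \<Rightarrow> nat set \<Rightarrow> (nat \<Rightarrow> nat \<Rightarrow> complex) \<Rightarrow> real) \<Rightarrow> real \<Rightarrow>
    ('b::finite) idx set \<Rightarrow> 'b idx set \<Rightarrow> ('b idx \<Rightarrow> 'b idx \<Rightarrow> complex) \<Rightarrow> real \<Rightarrow> real" where
  "tnorm nrm K0 C B M s =
     sqrt (K0 * (\<Sum>n\<in>diffs C B. (brk nrm C B M n)\<^sup>2 * (jbr n) powr (2 * s)))"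

end

theory Submission
  imports Defs
begin


definition gg :: "int \<Rightarrow> real" where "gg m = 1 / (max (real_of_int \<bar>m\<bar>) 1)^2"

lemma gg_nonneg: "gg m \<ge> 0" by (simp add: gg_def)
lemma gg_minus: "gg (-m) = gg m" by (simp add: gg_def)

lemma sum_inv_sq: "(\<Sum>k\<in>{1..Suc N}. 1/(real k)^2) \<le> 2 - 1/real (Suc N)"
proof (induction N)
  case 0 then show ?case by simp
next
  case (Suc N)
  have "(\<Sum>k\<in>{1..Suc (Suc N)}. 1/(real k)^2) = (\<Sum>k\<in>{1..Suc N}. 1/(real k)^2) + 1/(real (Suc (Suc N)))^2"
    by simp
  also have "\<dots> \<le> 2 - 1/real (Suc N) + 1/(real (Suc (Suc N)))^2" using Suc by simp
  also have "\<dots> \<le> 2 - 1/real (Suc (Suc N))"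
  proof -
    define x where "x = real (Suc N)"
    have x: "x \<ge> 1" by (simp add: x_def)
    have e: "real (Suc (Suc N)) = x + 1" by (simp add: x_def)
    have "1/(x+1)^2 + 1/(x+1) \<le> 1/x"
    proof -
      have xp: "x+1 > 0" "x > 0" using x by simp_all
      have a: "1/x - 1/(x+1) = 1/(x*(x+1))" using xp by (simp add: field_simps)
      have "x*(x+1) \<le> (x+1)^2" using xp by (simp add: power2_eq_square)
      then have "1/(x+1)^2 \<le> 1/(x*(x+1))" using xp by (intro divide_left_mono) auto
      then show ?thesis using a by simp
    qed
    then show ?thesis unfolding e x_def[symmetric] by simp
  qed
  finally show ?case .
qed

lemma sum_gg_nat: "(\<Sum>k\<in>{0..N}. gg (int k)) \<le> 3"
proof (cases N)
  case 0 then show ?thesis by (simp add: gg_def)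
next
  case (Suc M)
  have "{0..N} = insert 0 {1..Suc M}" using Suc by auto
  then have "(\<Sum>k\<in>{0..N}. gg (int k)) = 1 + (\<Sum>k\<in>{1..Suc M}. gg (int k))"
    by (simp add: gg_def)
  also have "(\<Sum>k\<in>{1..Suc M}. gg (int k)) = (\<Sum>k\<in>{1..Suc M}. 1/(real k)^2)"
    by (rule sum.cong) (auto simp: gg_def max_def)
  also have "\<dots> \<le> 2" using sum_inv_sq[of M] by (smt (verit) of_nat_0_le_iff divide_nonneg_nonneg)
  finally show ?thesis by simp
qed

lemma sum_gg_bound:
  assumes "finite A" shows "(\<Sum>m\<in>A. gg m) \<le> 6"
proof -
  define N where "N = nat (Max (insert 0 (abs ` A)))"
  have bnd: "\<bar>m\<bar> \<le> int N" if "m \<in> A" for m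
    using assms that unfolding N_def by (auto intro!: Max_ge)
  have S: "(\<Sum>m\<in>int ` {0..N}. gg m) \<le> 3"
    by (subst sum.reindex) (auto simp: sum_gg_nat)
  have P1: "(\<Sum>m\<in>A \<inter> {0..}. gg m) \<le> 3"
  proof -
    have "A \<inter> {0..} \<subseteq> int ` {0..N}"
    proof
      fix m assume m: "m \<in> A \<inter> {0..}"
      then have "m = int (nat m)" "nat m \<le> N" using bnd[of m] by auto
      then show "m \<in> int ` {0..N}" by force
    qed
    then have "(\<Sum>m\<in>A \<inter> {0..}. gg m) \<le> (\<Sum>m\<in>int ` {0..N}. gg m)"
      by (intro sum_mono2) (auto simp: gg_nonneg)
    with S show ?thesis by simp
  qed
  have P2: "(\<Sum>m\<in>A \<inter> {..<0}. gg m) \<le> 3"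
  proof -
    have "(\<Sum>m\<in>A \<inter> {..<0}. gg m) = (\<Sum>m\<in>uminus ` (A \<inter> {..<0}). gg m)"
      by (subst sum.reindex) (auto simp: gg_minus inj_on_def)
    also have "uminus ` (A \<inter> {..<0}) \<subseteq> int ` {0..N}"
    proof
      fix m assume "m \<in> uminus ` (A \<inter> {..<0})"
      then obtain x where x: "x \<in> A" "x < 0" "m = -x" by auto
      then have "m = int (nat m)" "nat m \<le> N" using bnd[of x] by auto
      then show "m \<in> int ` {0..N}" by force
    qed
    then have "(\<Sum>m\<in>uminus ` (A \<inter> {..<0}). gg m) \<le> (\<Sum>m\<in>int ` {0..N}. gg m)"
      by (intro sum_mono2) (auto simp: gg_nonneg)
    finally show ?thesis using S by simp
  qed
  have "A = (A \<inter> {0..}) \<union> (A \<inter> {..<0})" by auto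
  then have "(\<Sum>m\<in>A. gg m) = (\<Sum>m\<in>A \<inter> {0..}. gg m) + (\<Sum>m\<in>A \<inter> {..<0}. gg m)"
    using assms by (subst sum.union_disjoint[symmetric]) auto
  with P1 P2 show ?thesis by simp
qed

lemma sum_prod_gg:
  fixes F :: "(int ^ 'b::finite) set"
  assumes "finite F"
  shows "(\<Sum>n\<in>F. \<Prod>k\<in>UNIV. gg (n $ k)) \<le> 6 ^ CARD('b)"
proof -
  define A where "A = (\<Union>k. (\<lambda>n. n $ k) ` F)"
  have fA: "finite A" using assms unfolding A_def by auto
  have sub: "F \<subseteq> vec_lambda ` (PiE UNIV (\<lambda>_. A))"
  proof
    fix n assume "n \<in> F"
    then have "vec_nth n \<in> PiE UNIV (\<lambda>_. A)" by (auto simp: A_def)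
    then show "n \<in> vec_lambda ` (PiE UNIV (\<lambda>_. A))"
      by (metis image_eqI vec_nth_inverse)
  qed
  have fP: "finite (PiE (UNIV::'b set) (\<lambda>_. A))" using fA by (simp add: finite_PiE)
  have "(\<Sum>n\<in>F. \<Prod>k\<in>UNIV. gg (n $ k)) \<le> (\<Sum>n\<in>vec_lambda ` (PiE (UNIV::'b set) (\<lambda>_. A)). \<Prod>k\<in>UNIV. gg (n $ k))"
  proof (rule sum_mono2)
    show "finite (vec_lambda ` (PiE UNIV (\<lambda>_. A)) :: (int^'b) set)" using fP by simp
    show "F \<subseteq> vec_lambda ` (PiE UNIV (\<lambda>_. A))" by (rule sub)
  qed (auto intro!: prod_nonneg simp: gg_nonneg)
  also have "\<dots> = (\<Sum>f\<in>PiE (UNIV::'b set) (\<lambda>_. A). \<Prod>k\<in>UNIV. gg (f k))"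
    by (subst sum.reindex) (auto simp: inj_on_def vec_lambda_inverse)
  also have "\<dots> = (\<Prod>k\<in>(UNIV::'b set). \<Sum>m\<in>A. gg m)"
    using fA by (subst prod_sum_PiE) auto
  also have "\<dots> \<le> (\<Prod>k\<in>(UNIV::'b set). 6)"
    by (intro prod_mono) (auto simp: sum_nonneg gg_nonneg sum_gg_bound fA)
  finally show ?thesis by simp
qed



lemma diffs_finite: "finite C \<Longrightarrow> finite B \<Longrightarrow> finite (diffs C B)"
proof -
  assume f: "finite C" "finite B"
  have "diffs C B = (\<lambda>(i,i'). i - i') ` (fst ` C \<times> fst ` B)"
    unfolding diffs_def by force
  then show ?thesis using f by simp
qed

lemma brkset_finite:
  assumes "finite C" "finite B"
  shows "finite {nrm (sites C i) (sites B i') (blk M i i') | i i'.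
               i \<in> fst ` C \<and> i' \<in> fst ` B \<and> i - i' = n}"
proof -
  have "{nrm (sites C i) (sites B i') (blk M i i') | i i'.
               i \<in> fst ` C \<and> i' \<in> fst ` B \<and> i - i' = n}
        \<subseteq> (\<lambda>(i,i'). nrm (sites C i) (sites B i') (blk M i i')) ` (fst ` C \<times> fst ` B)"
    by force
  then show ?thesis by (rule finite_subset) (simp add: assms)
qed

lemma brk_attained:
  assumes "finite C" "finite B" "n \<in> diffs C B"
  shows "\<exists>i i'. i \<in> fst ` C \<and> i' \<in> fst ` B \<and> i - i' = n \<and>
           brk nrm C B M n = nrm (sites C i) (sites B i') (blk M i i')"
proof -
  let ?S = "{nrm (sites C i) (sites B i') (blk M i i') | i i'.
               i \<in> fst ` C \<and> i' \<in> fst ` B \<and> i - i' = n}"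
  have ne: "?S \<noteq> {}" using assms(3) unfolding diffs_def by blast
  have "Max ?S \<in> ?S" using brkset_finite[OF assms(1,2)] ne by (rule Max_in)
  then show ?thesis using assms(3) unfolding brk_def by auto
qed

lemma brk_ge:
  assumes "finite C" "finite B" "i \<in> fst ` C" "i' \<in> fst ` B" "n = i - i'"
  shows "nrm (sites C i) (sites B i') (blk M i i') \<le> brk nrm C B M n"
proof -
  have "n \<in> diffs C B" using assms unfolding diffs_def by blast
  moreover have "nrm (sites C i) (sites B i') (blk M i i') \<le> Max {nrm (sites C i) (sites B i') (blk M i i') | i i'.
               i \<in> fst ` C \<and> i' \<in> fst ` B \<and> i - i' = n}"
    by (rule Max_ge[OF brkset_finite[OF assms(1,2)]]) (use assms in blast)
  ultimately show ?thesis unfolding brk_def by simp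
qed

lemma jbr_ge1: "jbr n \<ge> 1" by (simp add: jbr_def)

lemma jbr_ge: "jbr (n::int^'b::finite) \<ge> max (real_of_int \<bar>n $ k\<bar>) 1"
proof -
  have "real_of_int \<bar>n $ k\<bar> \<le> supn n" unfolding supn_def by (rule Max_ge) auto
  then show ?thesis unfolding jbr_def by auto
qed

lemma inv_jbr_le: "1 / jbr (n::int^'b::finite) ^ (2 * CARD('b)) \<le> (\<Prod>k\<in>UNIV. gg (n $ k))"
proof -
  have "1 / jbr n ^ (2 * CARD('b)) = (\<Prod>k\<in>(UNIV::'b set). 1 / jbr n ^ 2)"
    by (simp add: power_mult power_one_over)
  also have "\<dots> \<le> (\<Prod>k\<in>UNIV. gg (n $ k))"
  proof (rule prod_mono)
    fix k :: 'b
    have m: "max (real_of_int \<bar>n $ k\<bar>) 1 \<le> jbr n" by (rule jbr_ge)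
    have p: "0 < max (real_of_int \<bar>n $ k\<bar>) 1" by simp
    have "(max (real_of_int \<bar>n $ k\<bar>) 1)^2 \<le> jbr n ^ 2"
      using m p by (intro power_mono) auto
    then have "1 / jbr n ^ 2 \<le> 1 / (max (real_of_int \<bar>n $ k\<bar>) 1)^2"
      using p jbr_ge1[of n] by (intro divide_left_mono mult_pos_pos) auto
    then show "0 \<le> 1 / jbr n ^ 2 \<and> 1 / jbr n ^ 2 \<le> gg (n $ k)"
      by (simp add: gg_def)
  qed
  finally show ?thesis .
qed



lemma term_bound:
  fixes nrm :: "nat set \<Rightarrow> nat set \<Rightarrow> (nat \<Rightarrow> nat \<Rightarrow> complex) \<Rightarrow> real"
    and B C :: "('b::finite) idx set" and M and K0 T s :: real
  assumes bn: "block_norm nrm" and K0: "K0 > 0"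
    and fin: "finite B" "finite C" and BC: "B \<subseteq> UNIV \<times> {0,1}" "C \<subseteq> UNIV \<times> {0,1}"
    and T: "\<And>i. i \<in> fst ` C \<Longrightarrow> tnorm nrm K0 (C \<inter> ({i} \<times> UNIV)) B M (s + real CARD('b)) \<le> T"
    and n: "n \<in> diffs C B"
  shows "(brk nrm C B M n)\<^sup>2 * (jbr n) powr (2 * s) \<le> T\<^sup>2 / K0 * (\<Prod>k\<in>UNIV. gg (n $ k))"
proof -
  obtain i i' where ii: "i \<in> fst ` C" "i' \<in> fst ` B" "i - i' = n"
    and bv: "brk nrm C B M n = nrm (sites C i) (sites B i') (blk M i i')"
    using brk_attained[OF fin(2,1) n] by blast
  define Ci where "Ci = C \<inter> ({i} \<times> UNIV)"
  have fCi: "finite Ci" using fin unfolding Ci_def by simp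
  have fstCi: "i \<in> fst ` Ci" using ii(1) unfolding Ci_def by force
  have sCi: "sites Ci i = sites C i" unfolding sites_def Ci_def by auto
  have nonneg: "0 \<le> nrm (sites C i) (sites B i') (blk M i i')"
  proof -
    have "sites C i \<subseteq> {0,1}" "sites B i' \<subseteq> {0,1}" using BC unfolding sites_def by auto
    moreover have nn: "\<forall>R S U. R \<subseteq> {0,1} \<and> S \<subseteq> {0,1} \<longrightarrow> nrm R S U \<ge> 0"
      by (rule conjunct1[OF conjunct2[OF bn[unfolded block_norm_def]]])
    ultimately show ?thesis using nn[rule_format, of "sites C i" "sites B i'" "blk M i i'"] by simp
  qed
  have le1: "brk nrm C B M n \<le> brk nrm Ci B M n"
    using brk_ge[OF fCi fin(1) fstCi ii(2) ii(3)[symmetric], of nrm M] unfolding sCi bv .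
  have nCi: "n \<in> diffs Ci B" using fstCi ii unfolding diffs_def by blast
  define b where "b = CARD('b)"
  define tn where "tn = tnorm nrm K0 Ci B M (s + real b)"
  define Sm where "Sm = (\<Sum>n\<in>diffs Ci B. (brk nrm Ci B M n)\<^sup>2 * (jbr n) powr (2 * (s + real b)))"
  have Sm_nn: "Sm \<ge> 0" unfolding Sm_def by (intro sum_nonneg) simp
  have tn: "tn = sqrt (K0 * Sm)" unfolding tn_def Sm_def tnorm_def by simp
  have tn_nn: "tn \<ge> 0" using tn K0 Sm_nn by simp
  have tnT: "tn \<le> T" using T[OF ii(1)] unfolding tn_def Ci_def b_def by simp
  have KS: "0 \<le> K0 * Sm" using K0 Sm_nn by simp
  have "tn\<^sup>2 = K0 * Sm" using tn KS by simp
  then have Sm_eq: "Sm = tn\<^sup>2 / K0" using K0 by simp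
  have "(brk nrm Ci B M n)\<^sup>2 * (jbr n) powr (2 * (s + real b)) \<le> Sm"
    unfolding Sm_def using diffs_finite[OF fCi fin(1)] nCi
    by (intro member_le_sum) auto
  also have "\<dots> \<le> T\<^sup>2 / K0"
    unfolding Sm_eq using tn_nn tnT K0 by (intro divide_right_mono power_mono) auto
  finally have A: "(brk nrm Ci B M n)\<^sup>2 * (jbr n) powr (2 * (s + real b)) \<le> T\<^sup>2 / K0" .
  have j1: "jbr n \<ge> 1" by (rule jbr_ge1)
  have pw: "(jbr n) powr (2 * (s + real b)) = (jbr n) powr (2 * s) * jbr n ^ (2 * b)"
  proof -
    have "(jbr n) powr (2 * (s + real b)) = (jbr n) powr (2 * s) * (jbr n) powr (real (2 * b))"
      by (simp add: powr_add[symmetric] algebra_simps)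
    also have "(jbr n) powr (real (2 * b)) = jbr n ^ (2 * b)"
      using j1 by (intro powr_realpow) simp
    finally show ?thesis .
  qed
  have bb: "(brk nrm C B M n)\<^sup>2 \<le> (brk nrm Ci B M n)\<^sup>2"
    using le1 bv nonneg by (intro power_mono) auto
  have jp: "jbr n ^ (2 * b) > 0" using j1 by simp
  have "(brk nrm C B M n)\<^sup>2 * (jbr n) powr (2 * s) * jbr n ^ (2 * b)
      \<le> (brk nrm Ci B M n)\<^sup>2 * (jbr n) powr (2 * s) * jbr n ^ (2 * b)"
    using bb jp by (intro mult_right_mono) auto
  also have "\<dots> = (brk nrm Ci B M n)\<^sup>2 * (jbr n) powr (2 * (s + real b))"
    unfolding pw by (simp add: mult.assoc)
  finally have C: "(brk nrm C B M n)\<^sup>2 * (jbr n) powr (2 * s) * jbr n ^ (2 * b) \<le> T\<^sup>2 / K0"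
    using A by linarith
  have "(brk nrm C B M n)\<^sup>2 * (jbr n) powr (2 * s) \<le> (T\<^sup>2 / K0) / jbr n ^ (2 * b)"
    using C jp by (subst pos_le_divide_eq) auto
  then have "(brk nrm C B M n)\<^sup>2 * (jbr n) powr (2 * s) \<le> T\<^sup>2 / K0 * (1 / jbr n ^ (2 * b))"
    by simp
  also have "\<dots> \<le> T\<^sup>2 / K0 * (\<Prod>k\<in>UNIV. gg (n $ k))"
    using K0 inv_jbr_le[of n] unfolding b_def by (intro mult_left_mono) auto
  finally show ?thesis .
qed



theorem lemma3p7:
  fixes nrm :: "nat set \<Rightarrow> nat set \<Rightarrow> (nat \<Rightarrow> nat \<Rightarrow> complex) \<Rightarrow> real"
    and K0 :: real
  assumes "CARD('b::finite) \<ge> 2"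
    and "block_norm nrm"
    and "K0 > 0"
  shows "\<exists>K1 > 0. \<forall>(B :: 'b idx set) (C :: 'b idx set) (M :: 'b idx \<Rightarrow> 'b idx \<Rightarrow> complex) (s :: real).
           finite B \<and> finite C \<and> B \<subseteq> UNIV \<times> {0,1} \<and> C \<subseteq> UNIV \<times> {0,1} \<and> s \<ge> 0 \<longrightarrow>
           tnorm nrm K0 C B M s
             \<le> K1 * Max (insert 0 ((\<lambda>i. tnorm nrm K0 (C \<inter> ({i} \<times> UNIV)) B M (s + real CARD('b))) ` fst ` C))"
proof (intro exI[of _ "sqrt (6 ^ CARD('b))"] conjI allI impI)
  show "sqrt (6 ^ CARD('b)) > (0::real)" by simp
  fix B C :: "'b idx set" and M and s :: real
  assume h: "finite B \<and> finite C \<and> B \<subseteq> UNIV \<times> {0,1} \<and> C \<subseteq> UNIV \<times> {0,1} \<and> s \<ge> 0"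
  define T where "T = Max (insert 0 ((\<lambda>i. tnorm nrm K0 (C \<inter> ({i} \<times> UNIV)) B M (s + real CARD('b))) ` fst ` C))"
  have fT: "finite (insert 0 ((\<lambda>i. tnorm nrm K0 (C \<inter> ({i} \<times> UNIV)) B M (s + real CARD('b))) ` fst ` C))"
    using h by simp
  have T0: "T \<ge> 0" unfolding T_def using fT by (intro Max_ge) auto
  have Ti: "tnorm nrm K0 (C \<inter> ({i} \<times> UNIV)) B M (s + real CARD('b)) \<le> T" if "i \<in> fst ` C" for i
    unfolding T_def using fT that by (intro Max_ge) auto
  have K0: "K0 > 0" by (rule assms(3))
  let ?S = "(\<Sum>n\<in>diffs C B. (brk nrm C B M n)\<^sup>2 * (jbr n) powr (2 * s))"
  have "?S \<le> (\<Sum>n\<in>diffs C B. T\<^sup>2 / K0 * (\<Prod>k\<in>UNIV. gg (n $ k)))"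
    using h by (intro sum_mono term_bound[OF assms(2) K0, where T = T] Ti) auto
  also have "\<dots> = T\<^sup>2 / K0 * (\<Sum>n\<in>diffs C B. \<Prod>k\<in>UNIV. gg (n $ k))"
    by (simp add: sum_distrib_left)
  also have "\<dots> \<le> T\<^sup>2 / K0 * 6 ^ CARD('b)"
    using h K0 by (intro mult_left_mono sum_prod_gg diffs_finite) auto
  finally have S: "?S \<le> T\<^sup>2 / K0 * 6 ^ CARD('b)" .
  have "tnorm nrm K0 C B M s = sqrt (K0 * ?S)" unfolding tnorm_def by simp
  also have "\<dots> \<le> sqrt (K0 * (T\<^sup>2 / K0 * 6 ^ CARD('b)))"
    using S K0 by (intro real_sqrt_le_mono mult_left_mono) auto
  also have "K0 * (T\<^sup>2 / K0 * 6 ^ CARD('b)) = T\<^sup>2 * 6 ^ CARD('b)" using K0 by simp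
  also have "sqrt (T\<^sup>2 * 6 ^ CARD('b)) = T * sqrt (6 ^ CARD('b))"
    using T0 by (simp add: real_sqrt_mult)
  finally show "tnorm nrm K0 C B M s \<le> sqrt (6 ^ CARD('b)) * Max (insert 0 ((\<lambda>i. tnorm nrm K0 (C \<inter> ({i} \<times> UNIV)) B M (s + real CARD('b))) ` fst ` C))"
    unfolding T_def[symmetric] by (simp add: mult.commute)
qed

end
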